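(* Every $r$-graph whose underlying simple graph is the Wagner graph $V_8$ is of class $1$, i.e., its edge-chromatic number equals $r$.
   Context: Graphs may have parallel edges but no loops. An $r$-graph is an $r$-regular graph $G$ such that for every $X\subseteq V(G)$ of odd cardinality, at least $r$ edges have exactly one end in $X$. A graph is class $1$ if its edge-chromatic number (minimum number of colors in a proper edge-coloring) equals its maximum degree. The Wagner graph $V_8$ is the cubic graph obtained from a cycle $v_0v_1\cdots v_7v_0$ by adding the edges $v_iv_{i+4}$ for $i=0,1,2,3$. *)

theory Defs
  imports Main
begin

text \<open>A multigraph (parallel edges allowed, no loops) is given by a finite vertex set V,
  a finite edge set E and an incidence map ends assigning to each edge its two distinct ends.\<close>

definition multigraph :: "'v set \<Rightarrow> 'e set \<Rightarrow> ('e \<Rightarrow> 'v set) \<Rightarrow> bool" where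
  "multigraph V E ends \<longleftrightarrow> finite V \<and> finite E \<and>
     (\<forall>e\<in>E. ends e \<subseteq> V \<and> card (ends e) = 2)"

definition degree :: "'e set \<Rightarrow> ('e \<Rightarrow> 'v set) \<Rightarrow> 'v \<Rightarrow> nat" where
  "degree E ends v = card {e\<in>E. v \<in> ends e}"

definition cut :: "'e set \<Rightarrow> ('e \<Rightarrow> 'v set) \<Rightarrow> 'v set \<Rightarrow> 'e set" where
  "cut E ends X = {e\<in>E. card (ends e \<inter> X) = 1}"

definition r_graph :: "nat \<Rightarrow> 'v set \<Rightarrow> 'e set \<Rightarrow> ('e \<Rightarrow> 'v set) \<Rightarrow> bool" where
  "r_graph r V E ends \<longleftrightarrow> multigraph V E ends \<and>
     (\<forall>v\<in>V. degree E ends v = r) \<and>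
     (\<forall>X. X \<subseteq> V \<and> odd (card X) \<longrightarrow> card (cut E ends X) \<ge> r)"

definition adjacent :: "'e set \<Rightarrow> ('e \<Rightarrow> 'v set) \<Rightarrow> 'v \<Rightarrow> 'v \<Rightarrow> bool" where
  "adjacent E ends u v \<longleftrightarrow> (\<exists>e\<in>E. ends e = {u, v})"

text \<open>Wagner graph on vertices 0..7: cycle plus the four long diagonals.\<close>
definition wagner_adj :: "nat \<Rightarrow> nat \<Rightarrow> bool" where
  "wagner_adj i j \<longleftrightarrow> i < 8 \<and> j < 8 \<and>
     ((i + 1) mod 8 = j \<or> (j + 1) mod 8 = i \<or> (i + 4) mod 8 = j)"

definition underlying_is_wagner :: "'v set \<Rightarrow> 'e set \<Rightarrow> ('e \<Rightarrow> 'v set) \<Rightarrow> bool" where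
  "underlying_is_wagner V E ends \<longleftrightarrow>
     (\<exists>f. bij_betw f V {0..<8} \<and>
        (\<forall>u\<in>V. \<forall>v\<in>V. adjacent E ends u v \<longleftrightarrow> wagner_adj (f u) (f v)))"

definition proper_edge_colouring :: "'e set \<Rightarrow> ('e \<Rightarrow> 'v set) \<Rightarrow> ('e \<Rightarrow> nat) \<Rightarrow> nat \<Rightarrow> bool" where
  "proper_edge_colouring E ends c k \<longleftrightarrow>
     (\<forall>e\<in>E. c e < k) \<and>
     (\<forall>e\<in>E. \<forall>e'\<in>E. e \<noteq> e' \<and> ends e \<inter> ends e' \<noteq> {} \<longrightarrow> c e \<noteq> c e')"

definition edge_chromatic_number :: "'e set \<Rightarrow> ('e \<Rightarrow> 'v set) \<Rightarrow> nat" where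
  "edge_chromatic_number E ends = (LEAST k. \<exists>c. proper_edge_colouring E ends c k)"

end

theory Submission
  imports Defs
begin

definition WW :: "nat set set" where
 "WW = {{0,1},{1,2},{2,3},{3,4},{4,5},{5,6},{6,7},{7,0},{0,4},{1,5},{2,6},{3,7}}"

definition "MR0 = ({{0,1},{2,3},{4,5},{6,7}} :: nat set set)"
definition "MR1 = ({{1,2},{3,4},{5,6},{7,0}} :: nat set set)"
definition "MS = ({{0,4},{1,5},{2,6},{3,7}} :: nat set set)"
definition "MP0 = ({{0,4},{1,5},{2,3},{6,7}} :: nat set set)"
definition "MP1 = ({{1,5},{2,6},{3,4},{7,0}} :: nat set set)"
definition "MP2 = ({{2,6},{3,7},{4,5},{0,1}} :: nat set set)"
definition "MP3 = ({{3,7},{0,4},{5,6},{1,2}} :: nat set set)"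

lemma disj4:
  assumes "T \<in> {A,B,C,D}" "T' \<in> {A,B,C,D}" "T \<noteq> T'"
    "A \<inter> B = {}" "A \<inter> C = {}" "A \<inter> D = {}" "B \<inter> C = {}" "B \<inter> D = {}" "C \<inter> D = {}"
  shows "T \<inter> T' = {}"
  using assms by blast

lemma matchings:
  assumes "M \<in> {MR0, MR1, MS, MP0, MP1, MP2, MP3}" "T \<in> M" "T' \<in> M" "T \<noteq> T'"
  shows "T \<inter> T' = {}"
proof -
  have "M = MR0 \<or> M = MR1 \<or> M = MS \<or> M = MP0 \<or> M = MP1 \<or> M = MP2 \<or> M = MP3"
    using assms(1) by blast
  then show ?thesis
  proof (elim disjE)
    assume h: "M = MR0" show ?thesis using assms(2-4) unfolding h MR0_def by (rule disj4) simp_all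
  next
    assume h: "M = MR1" show ?thesis using assms(2-4) unfolding h MR1_def by (rule disj4) simp_all
  next
    assume h: "M = MS" show ?thesis using assms(2-4) unfolding h MS_def by (rule disj4) simp_all
  next
    assume h: "M = MP0" show ?thesis using assms(2-4) unfolding h MP0_def by (rule disj4) simp_all
  next
    assume h: "M = MP1" show ?thesis using assms(2-4) unfolding h MP1_def by (rule disj4) simp_all
  next
    assume h: "M = MP2" show ?thesis using assms(2-4) unfolding h MP2_def by (rule disj4) simp_all
  next
    assume h: "M = MP3" show ?thesis using assms(2-4) unfolding h MP3_def by (rule disj4) simp_all
  qed
qed

lemma wagner_W: "wagner_adj i j \<Longrightarrow> {i,j} \<in> WW"
proof -
  assume a: "wagner_adj i j"
  hence "i < 8" "j < 8" unfolding wagner_adj_def by auto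
  hence "i=0 \<or> i=1 \<or> i=2 \<or> i=3 \<or> i=4 \<or> i=5 \<or> i=6 \<or> i=7"
    and "j=0 \<or> j=1 \<or> j=2 \<or> j=3 \<or> j=4 \<or> j=5 \<or> j=6 \<or> j=7" by auto
  thus ?thesis using a unfolding wagner_adj_def WW_def
    by (elim disjE) (simp_all add: doubleton_eq_iff)
qed

lemma colouring_from_list:
  fixes tp :: "'e \<Rightarrow> 'a"
  assumes fin: "finite E"
    and cnt: "\<And>T. card {e\<in>E. tp e = T} = length (filter (\<lambda>M. T \<in> M) L)"
  shows "\<exists>c. \<forall>e\<in>E. c e < length L \<and> tp e \<in> L ! (c e) \<and>
            (\<forall>e'\<in>E. tp e' = tp e \<and> c e' = c e \<longrightarrow> e' = e)"
proof -
  have "\<forall>T. \<exists>h. bij_betw h {e\<in>E. tp e = T} {i. i < length L \<and> T \<in> L!i}"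
  proof
    fix T
    show "\<exists>h. bij_betw h {e\<in>E. tp e = T} {i. i < length L \<and> T \<in> L!i}"
      by (rule finite_same_card_bij) (use fin cnt[of T] length_filter_conv_card in auto)
  qed
  then obtain H where H: "\<And>T. bij_betw (H T) {e\<in>E. tp e = T} {i. i < length L \<and> T \<in> L!i}"
    by metis
  define c where "c e = H (tp e) e" for e
  show ?thesis
  proof (rule exI[of _ c], intro ballI conjI allI impI)
    fix e assume e: "e \<in> E"
    have "c e \<in> {i. i < length L \<and> tp e \<in> L!i}"
      using bij_betwE[OF H[of "tp e"]] e c_def by auto
    thus "c e < length L" "tp e \<in> L ! c e" by auto
    fix e' assume "e' \<in> E" "tp e' = tp e \<and> c e' = c e"
    then show "e' = e" using bij_betw_imp_inj_on[OF H[of "tp e"]] e c_def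
      by (auto simp: inj_on_def)
  qed
qed

theorem corollary2p8:
  fixes V :: "'v set" and E :: "'e set" and ends :: "'e \<Rightarrow> 'v set" and r :: nat
  assumes "r_graph r V E ends"
    and "underlying_is_wagner V E ends"
  shows "edge_chromatic_number E ends = r"
proof -
  from assms(1) have mg: "multigraph V E ends" and degs: "\<forall>v\<in>V. degree E ends v = r"
    and cuts: "\<And>X. X \<subseteq> V \<Longrightarrow> odd (card X) \<Longrightarrow> card (cut E ends X) \<ge> r"
    unfolding r_graph_def by auto
  from mg have finE: "finite E" and endsE: "\<And>e. e\<in>E \<Longrightarrow> ends e \<subseteq> V \<and> card (ends e) = 2"
    unfolding multigraph_def by auto
  from assms(2) obtain f where bij: "bij_betw f V {0..<8}"
    and adj: "\<forall>u\<in>V. \<forall>v\<in>V. adjacent E ends u v \<longleftrightarrow> wagner_adj (f u) (f v)"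
    unfolding underlying_is_wagner_def by blast
  have injf: "inj_on f V" and fV: "f ` V = {0..<8}" using bij by (auto simp: bij_betw_def)
  define g where "g = inv_into V f"
  have gV: "\<And>i. i < 8 \<Longrightarrow> g i \<in> V \<and> f (g i) = i"
    using fV unfolding g_def by (auto simp: inv_into_into f_inv_into_f)
  have ginj: "inj_on g {0..<8}" unfolding g_def using fV by (simp add: inj_on_inv_into)
  define tp where "tp e = f ` ends e" for e
  have tpW: "\<And>e. e\<in>E \<Longrightarrow> tp e \<in> WW"
  proof -
    fix e assume e: "e\<in>E"
    then obtain u v where uv: "ends e = {u,v}" "u\<noteq>v" using endsE[OF e] card_2_iff by metis
    have uvV: "u\<in>V" "v\<in>V" using endsE[OF e] uv by auto
    have "adjacent E ends u v" unfolding adjacent_def using e uv by blast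
    hence "wagner_adj (f u) (f v)" using adj uvV by blast
    thus "tp e \<in> WW" using wagner_W tp_def uv by simp
  qed
  have memtp: "\<And>e v. e\<in>E \<Longrightarrow> v\<in>V \<Longrightarrow> v \<in> ends e \<longleftrightarrow> f v \<in> tp e"
    using endsE injf unfolding tp_def inj_on_def by blast
  define m where "m T = card {e\<in>E. tp e = T}" for T
  have key: "card {e\<in>E. P (tp e)} = (\<Sum>T\<in>S. m T)"
    if fS: "finite S" and PS: "\<forall>T\<in>WW. P T \<longleftrightarrow> T \<in> S" for P S
  proof -
    have "{e\<in>E. P (tp e)} = (\<Union>T\<in>S. {e\<in>E. tp e = T})" using PS tpW by auto
    moreover have "card (\<Union>T\<in>S. {e\<in>E. tp e = T}) = (\<Sum>T\<in>S. card {e\<in>E. tp e = T})"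
      by (rule card_UN_disjoint) (use fS finE in auto)
    ultimately show ?thesis by (simp add: m_def)
  qed
  have deg: "card {e\<in>E. i \<in> tp e} = r" if i: "i < 8" for i
  proof -
    have "{e\<in>E. i \<in> tp e} = {e\<in>E. g i \<in> ends e}" using memtp gV[OF i] by auto
    thus ?thesis using degs gV[OF i] unfolding degree_def by auto
  qed
  have cutc0: "card {e\<in>E. card (tp e \<inter> {j,j+1,j+2}) = 1} \<ge> r" if j: "j+2 < 8" for j
  proof -
    define Y where "Y = {j,j+1,j+2}"
    define X where "X = g ` Y"
    have YV: "Y \<subseteq> {0..<8}" using j Y_def by auto
    have XV: "X \<subseteq> V" using gV YV X_def by auto
    have "card X = card Y" unfolding X_def using inj_on_subset[OF ginj YV] by (rule card_image)
    hence cX: "card X = 3" unfolding Y_def by simp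
    have "f ` X = (\<lambda>i. f (g i)) ` Y" by (simp add: X_def image_image)
    also have "\<dots> = Y" using gV YV by force
    finally have fX: "f ` X = Y" .
    have ce: "card (ends e \<inter> X) = card (tp e \<inter> Y)" if e: "e\<in>E" for e
    proof -
      have "tp e \<inter> Y = f ` (ends e \<inter> X)" unfolding tp_def
        using inj_on_image_Int[OF injf, of "ends e" X] endsE[OF e] XV fX by simp
      moreover have "card (f ` (ends e \<inter> X)) = card (ends e \<inter> X)"
        using inj_on_subset[OF injf, of "ends e \<inter> X"] endsE[OF e] by (intro card_image) blast
      ultimately show ?thesis by simp
    qed
    hence "cut E ends X = {e\<in>E. card (tp e \<inter> Y) = 1}" unfolding cut_def by auto
    moreover have "card (cut E ends X) \<ge> r" using cuts XV cX by simp
    ultimately show ?thesis unfolding Y_def by simp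
  qed
  have cutc: "card {e\<in>E. card (tp e \<inter> {j,k,l}) = 1} \<ge> r"
    if "j+2 < 8" "k = j+1" "l = j+2" for j k l
    unfolding that(2,3) by (rule cutc0[OF that(1)])
  have "card {e\<in>E. 0 \<in> tp e} = (\<Sum>T\<in>{{7,0},{0,1},{0,4}}. m T)"
    by (rule key) (simp_all add: WW_def doubleton_eq_iff)
  moreover have "(\<Sum>T\<in>{{7,0},{0,1},{0,4}}. m T) = m {7,0} + m {0,1} + m {0,4}" by (simp add: doubleton_eq_iff add_ac)
  moreover have "card {e\<in>E. 0 \<in> tp e} = r" by (rule deg) simp
  ultimately have d0: "m {7,0} + m {0,1} + m {0,4} = r" by linarith
  have "card {e\<in>E. 1 \<in> tp e} = (\<Sum>T\<in>{{0,1},{1,2},{1,5}}. m T)"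
    by (rule key) (simp_all add: WW_def doubleton_eq_iff)
  moreover have "(\<Sum>T\<in>{{0,1},{1,2},{1,5}}. m T) = m {0,1} + m {1,2} + m {1,5}" by (simp add: doubleton_eq_iff add_ac)
  moreover have "card {e\<in>E. 1 \<in> tp e} = r" by (rule deg) simp
  ultimately have d1: "m {0,1} + m {1,2} + m {1,5} = r" by linarith
  have "card {e\<in>E. 2 \<in> tp e} = (\<Sum>T\<in>{{1,2},{2,3},{2,6}}. m T)"
    by (rule key) (simp_all add: WW_def doubleton_eq_iff)
  moreover have "(\<Sum>T\<in>{{1,2},{2,3},{2,6}}. m T) = m {1,2} + m {2,3} + m {2,6}" by (simp add: doubleton_eq_iff add_ac)
  moreover have "card {e\<in>E. 2 \<in> tp e} = r" by (rule deg) simp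
  ultimately have d2: "m {1,2} + m {2,3} + m {2,6} = r" by linarith
  have "card {e\<in>E. 3 \<in> tp e} = (\<Sum>T\<in>{{2,3},{3,4},{3,7}}. m T)"
    by (rule key) (simp_all add: WW_def doubleton_eq_iff)
  moreover have "(\<Sum>T\<in>{{2,3},{3,4},{3,7}}. m T) = m {2,3} + m {3,4} + m {3,7}" by (simp add: doubleton_eq_iff add_ac)
  moreover have "card {e\<in>E. 3 \<in> tp e} = r" by (rule deg) simp
  ultimately have d3: "m {2,3} + m {3,4} + m {3,7} = r" by linarith
  have "card {e\<in>E. 4 \<in> tp e} = (\<Sum>T\<in>{{3,4},{4,5},{0,4}}. m T)"
    by (rule key) (simp_all add: WW_def doubleton_eq_iff)
  moreover have "(\<Sum>T\<in>{{3,4},{4,5},{0,4}}. m T) = m {3,4} + m {4,5} + m {0,4}" by (simp add: doubleton_eq_iff add_ac)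
  moreover have "card {e\<in>E. 4 \<in> tp e} = r" by (rule deg) simp
  ultimately have d4: "m {3,4} + m {4,5} + m {0,4} = r" by linarith
  have "card {e\<in>E. 5 \<in> tp e} = (\<Sum>T\<in>{{4,5},{5,6},{1,5}}. m T)"
    by (rule key) (simp_all add: WW_def doubleton_eq_iff)
  moreover have "(\<Sum>T\<in>{{4,5},{5,6},{1,5}}. m T) = m {4,5} + m {5,6} + m {1,5}" by (simp add: doubleton_eq_iff add_ac)
  moreover have "card {e\<in>E. 5 \<in> tp e} = r" by (rule deg) simp
  ultimately have d5: "m {4,5} + m {5,6} + m {1,5} = r" by linarith
  have "card {e\<in>E. 6 \<in> tp e} = (\<Sum>T\<in>{{5,6},{6,7},{2,6}}. m T)"
    by (rule key) (simp_all add: WW_def doubleton_eq_iff)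
  moreover have "(\<Sum>T\<in>{{5,6},{6,7},{2,6}}. m T) = m {5,6} + m {6,7} + m {2,6}" by (simp add: doubleton_eq_iff add_ac)
  moreover have "card {e\<in>E. 6 \<in> tp e} = r" by (rule deg) simp
  ultimately have d6: "m {5,6} + m {6,7} + m {2,6} = r" by linarith
  have "card {e\<in>E. 7 \<in> tp e} = (\<Sum>T\<in>{{6,7},{7,0},{3,7}}. m T)"
    by (rule key) (simp_all add: WW_def doubleton_eq_iff)
  moreover have "(\<Sum>T\<in>{{6,7},{7,0},{3,7}}. m T) = m {6,7} + m {7,0} + m {3,7}" by (simp add: doubleton_eq_iff add_ac)
  moreover have "card {e\<in>E. 7 \<in> tp e} = r" by (rule deg) simp
  ultimately have d7: "m {6,7} + m {7,0} + m {3,7} = r" by linarith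
  have "card {e\<in>E. card (tp e \<inter> {0,1,2}) = 1} = (\<Sum>T\<in>{{7,0},{2,3},{0,4},{1,5},{2,6}}. m T)"
    by (rule key) (simp_all add: WW_def doubleton_eq_iff)
  moreover have "(\<Sum>T\<in>{{7,0},{2,3},{0,4},{1,5},{2,6}}. m T) = m {7,0} + m {2,3} + m {0,4} + m {1,5} + m {2,6}" by (simp add: doubleton_eq_iff add_ac)
  moreover have "r \<le> card {e\<in>E. card (tp e \<inter> {0,1,2}) = 1}" by (rule cutc[of 0 1 2]) simp_all
  ultimately have k0: "m {7,0} + m {2,3} + m {0,4} + m {1,5} + m {2,6} \<ge> r" by linarith
  have "card {e\<in>E. card (tp e \<inter> {1,2,3}) = 1} = (\<Sum>T\<in>{{0,1},{3,4},{1,5},{2,6},{3,7}}. m T)"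
    by (rule key) (simp_all add: WW_def doubleton_eq_iff)
  moreover have "(\<Sum>T\<in>{{0,1},{3,4},{1,5},{2,6},{3,7}}. m T) = m {0,1} + m {3,4} + m {1,5} + m {2,6} + m {3,7}" by (simp add: doubleton_eq_iff add_ac)
  moreover have "r \<le> card {e\<in>E. card (tp e \<inter> {1,2,3}) = 1}" by (rule cutc[of 1 2 3]) simp_all
  ultimately have k1: "m {0,1} + m {3,4} + m {1,5} + m {2,6} + m {3,7} \<ge> r" by linarith
  have "card {e\<in>E. card (tp e \<inter> {2,3,4}) = 1} = (\<Sum>T\<in>{{1,2},{4,5},{2,6},{3,7},{0,4}}. m T)"
    by (rule key) (simp_all add: WW_def doubleton_eq_iff)
  moreover have "(\<Sum>T\<in>{{1,2},{4,5},{2,6},{3,7},{0,4}}. m T) = m {1,2} + m {4,5} + m {2,6} + m {3,7} + m {0,4}" by (simp add: doubleton_eq_iff add_ac)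
  moreover have "r \<le> card {e\<in>E. card (tp e \<inter> {2,3,4}) = 1}" by (rule cutc[of 2 3 4]) simp_all
  ultimately have k2: "m {1,2} + m {4,5} + m {2,6} + m {3,7} + m {0,4} \<ge> r" by linarith
  have "card {e\<in>E. card (tp e \<inter> {3,4,5}) = 1} = (\<Sum>T\<in>{{2,3},{5,6},{3,7},{0,4},{1,5}}. m T)"
    by (rule key) (simp_all add: WW_def doubleton_eq_iff)
  moreover have "(\<Sum>T\<in>{{2,3},{5,6},{3,7},{0,4},{1,5}}. m T) = m {2,3} + m {5,6} + m {3,7} + m {0,4} + m {1,5}" by (simp add: doubleton_eq_iff add_ac)
  moreover have "r \<le> card {e\<in>E. card (tp e \<inter> {3,4,5}) = 1}" by (rule cutc[of 3 4 5]) simp_all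
  ultimately have k3: "m {2,3} + m {5,6} + m {3,7} + m {0,4} + m {1,5} \<ge> r" by linarith

  obtain a0 a1 a2 a3 a4 a5 a6 a7 s0 s1 s2 s3 where
    av: "a0 = m {0,1}" "a1 = m {1,2}" "a2 = m {2,3}" "a3 = m {3,4}" "a4 = m {4,5}"
        "a5 = m {5,6}" "a6 = m {6,7}" "a7 = m {7,0}"
        "s0 = m {0,4}" "s1 = m {1,5}" "s2 = m {2,6}" "s3 = m {3,7}" by blast
  note dk = d0 d1 d2 d3 d4 d5 d6 d7 k0 k1 k2 k3
  have e4: "a4 = a0" "a5 = a1" "a6 = a2" "a7 = a3" using dk unfolding av by linarith+
  have b: "a0 + a1 \<le> r" "a1 + a2 \<le> r" "a2 + a3 \<le> r" "a3 + a0 \<le> r"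
    using dk unfolding av by linarith+
  define x0 where "x0 = min a0 a2"
  define x1 where "x1 = min a1 a3"
  define y2 where "y2 = a0 - x0"
  define y0 where "y0 = a2 - x0"
  define y3 where "y3 = a1 - x1"
  define y1 where "y1 = a3 - x1"
  define z where "z = r - (x0 + x1 + y0 + y1 + y2 + y3)"
  have xy: "x0 + y2 = a0" "x0 + y0 = a2" "x1 + y3 = a1" "x1 + y1 = a3"
    unfolding x0_def x1_def y0_def y1_def y2_def y3_def by auto
  have sumle: "x0 + x1 + y0 + y1 + y2 + y3 \<le> r"
    using b unfolding x0_def x1_def y0_def y1_def y2_def y3_def by (auto simp: min_def)
  hence zr: "z + x0 + x1 + y0 + y1 + y2 + y3 = r" unfolding z_def by linarith
  define L where "L = replicate x0 MR0 @ replicate x1 MR1 @ replicate y0 MP0 @ replicate y1 MP1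
     @ replicate y2 MP2 @ replicate y3 MP3 @ replicate z MS"
  have lenL: "length L = r" unfolding L_def using zr by simp
  have setL: "set L \<subseteq> {MR0, MR1, MS, MP0, MP1, MP2, MP3}"
  proof
    fix M assume "M \<in> set L"
    hence "(M = MR0 \<and> x0 \<noteq> 0) \<or> (M = MR1 \<and> x1 \<noteq> 0) \<or> (M = MP0 \<and> y0 \<noteq> 0) \<or>
      (M = MP1 \<and> y1 \<noteq> 0) \<or> (M = MP2 \<and> y2 \<noteq> 0) \<or> (M = MP3 \<and> y3 \<noteq> 0) \<or> (M = MS \<and> z \<noteq> 0)"
      unfolding L_def by (simp only: set_append Un_iff in_set_replicate)
    then show "M \<in> {MR0, MR1, MS, MP0, MP1, MP2, MP3}" by (simp only: insert_iff) blast
  qed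
  have cnt0: "card {e\<in>E. tp e = T} = length (filter (\<lambda>M. T \<in> M) L)" if "T \<notin> WW" for T
  proof -
    have h1: "{e\<in>E. tp e = T} = {}" using tpW that by auto
    moreover have h2: "filter (\<lambda>M. T \<in> M) L = []" using that
      unfolding L_def WW_def MR0_def MR1_def MS_def MP0_def MP1_def MP2_def MP3_def by auto
    show ?thesis unfolding h1 h2 by simp
  qed
  have gen: "card {e\<in>E. tp e = T} = length (filter (\<lambda>M. T \<in> M) L)"
    if "length (filter (\<lambda>M. T \<in> M) L) = k" "m T = k" for T k
    using that by (simp add: m_def)
  note defsM = L_def MR0_def MR1_def MS_def MP0_def MP1_def MP2_def MP3_def
  have c01: "card {e\<in>E. tp e = {0,1}} = length (filter (\<lambda>M. {0,1} \<in> M) L)"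
    by (rule gen[of _ "x0 + y2"]) (simp add: defsM doubleton_eq_iff, use xy av in simp)
  have c12: "card {e\<in>E. tp e = {1,2}} = length (filter (\<lambda>M. {1,2} \<in> M) L)"
    by (rule gen[of _ "x1 + y3"]) (simp add: defsM doubleton_eq_iff, use xy av in simp)
  have c23: "card {e\<in>E. tp e = {2,3}} = length (filter (\<lambda>M. {2,3} \<in> M) L)"
    by (rule gen[of _ "x0 + y0"]) (simp add: defsM doubleton_eq_iff, use xy av in simp)
  have c34: "card {e\<in>E. tp e = {3,4}} = length (filter (\<lambda>M. {3,4} \<in> M) L)"
    by (rule gen[of _ "x1 + y1"]) (simp add: defsM doubleton_eq_iff, use xy av in simp)
  have c45: "card {e\<in>E. tp e = {4,5}} = length (filter (\<lambda>M. {4,5} \<in> M) L)"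
    by (rule gen[of _ "x0 + y2"]) (simp add: defsM doubleton_eq_iff, use xy av e4 in simp)
  have c56: "card {e\<in>E. tp e = {5,6}} = length (filter (\<lambda>M. {5,6} \<in> M) L)"
    by (rule gen[of _ "x1 + y3"]) (simp add: defsM doubleton_eq_iff, use xy av e4 in simp)
  have c67: "card {e\<in>E. tp e = {6,7}} = length (filter (\<lambda>M. {6,7} \<in> M) L)"
    by (rule gen[of _ "x0 + y0"]) (simp add: defsM doubleton_eq_iff, use xy av e4 in simp)
  have c70: "card {e\<in>E. tp e = {7,0}} = length (filter (\<lambda>M. {7,0} \<in> M) L)"
    by (rule gen[of _ "x1 + y1"]) (simp add: defsM doubleton_eq_iff, use xy av e4 in simp)
  have c04: "card {e\<in>E. tp e = {0,4}} = length (filter (\<lambda>M. {0,4} \<in> M) L)"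
    by (rule gen[of _ "y0 + y3 + z"]) (simp add: defsM doubleton_eq_iff, use xy av e4 zr dk in linarith)
  have c15: "card {e\<in>E. tp e = {1,5}} = length (filter (\<lambda>M. {1,5} \<in> M) L)"
    by (rule gen[of _ "y0 + y1 + z"]) (simp add: defsM doubleton_eq_iff, use xy av e4 zr dk in linarith)
  have c26: "card {e\<in>E. tp e = {2,6}} = length (filter (\<lambda>M. {2,6} \<in> M) L)"
    by (rule gen[of _ "y1 + y2 + z"]) (simp add: defsM doubleton_eq_iff, use xy av e4 zr dk in linarith)
  have c37: "card {e\<in>E. tp e = {3,7}} = length (filter (\<lambda>M. {3,7} \<in> M) L)"
    by (rule gen[of _ "y2 + y3 + z"]) (simp add: defsM doubleton_eq_iff, use xy av e4 zr dk in linarith)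
  have cnt: "card {e\<in>E. tp e = T} = length (filter (\<lambda>M. T \<in> M) L)" for T
  proof (cases "T \<in> WW")
    case False then show ?thesis by (rule cnt0)
  next
    case True
    then have "T = {0,1} \<or> T = {1,2} \<or> T = {2,3} \<or> T = {3,4} \<or> T = {4,5} \<or> T = {5,6} \<or>
      T = {6,7} \<or> T = {7,0} \<or> T = {0,4} \<or> T = {1,5} \<or> T = {2,6} \<or> T = {3,7}"
      unfolding WW_def by (simp only: insert_iff empty_iff simp_thms)
    then show ?thesis
      using c01 c12 c23 c34 c45 c56 c67 c70 c04 c15 c26 c37 by (elim disjE) simp_all
  qed
  obtain c where cp: "\<forall>e\<in>E. c e < length L \<and> tp e \<in> L ! (c e) \<and>
            (\<forall>e'\<in>E. tp e' = tp e \<and> c e' = c e \<longrightarrow> e' = e)"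
    using colouring_from_list[OF finE cnt] by blast
  have pc: "proper_edge_colouring E ends c r"
    unfolding proper_edge_colouring_def
  proof (intro conjI ballI impI)
    fix e assume "e\<in>E" thus "c e < r" using cp lenL by auto
  next
    fix e e' assume e: "e\<in>E" "e'\<in>E" and ne: "e \<noteq> e' \<and> ends e \<inter> ends e' \<noteq> {}"
    show "c e \<noteq> c e'"
    proof
      assume ce: "c e = c e'"
      obtain v where v: "v \<in> ends e" "v \<in> ends e'" using ne by blast
      have "v\<in>V" using endsE e v by blast
      hence fv: "f v \<in> tp e \<inter> tp e'" using memtp e v by blast
      show False
      proof (cases "tp e = tp e'")
        case True
        from cp e(1) have ie: "\<forall>e''\<in>E. tp e'' = tp e \<and> c e'' = c e \<longrightarrow> e'' = e" by simp
        have "e' = e" using ie e(2) True ce by simp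
        then show False using ne by simp
      next
        case False
        have "L ! c e \<in> set L" using cp e lenL by simp
        moreover have "tp e \<in> L ! c e" "tp e' \<in> L ! c e" using cp e ce by auto
        ultimately have "tp e \<inter> tp e' = {}" using matchings[of "L ! c e" "tp e" "tp e'"] setL False by auto
        thus False using fv by blast
      qed
    qed
  qed
  have lower: "r \<le> k" if "proper_edge_colouring E ends c' k" for c' k
  proof -
    define v where "v = g 0"
    have vV: "v \<in> V" using gV v_def by simp
    define D where "D = {e\<in>E. v \<in> ends e}"
    have cD: "card D = r" using degs vV unfolding D_def degree_def by simp
    have "inj_on c' D"
    proof (rule inj_onI)
      fix x y assume "x \<in> D" "y \<in> D" "c' x = c' y"
      then show "x = y" using that unfolding D_def proper_edge_colouring_def by blast
    qed
    moreover have "c' ` D \<subseteq> {..<k}" using that unfolding D_def proper_edge_colouring_def by auto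
    ultimately have "card D \<le> card {..<k}" by (meson card_inj_on_le finite_lessThan)
    thus ?thesis using cD by simp
  qed
  show ?thesis unfolding edge_chromatic_number_def
    by (rule Least_equality) (use pc lower in auto)
qed
end
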